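(* (i) If $\mathcal{U}$ is a subspace of $\mathbb{R}^n$ with $\mu(\mathcal{U})<1/2$, then $\mathcal{U}$ is realizable. (ii) For every $\alpha\in(1/2,1]$ there is a subspace $\mathcal{U}$ (of some $\mathbb{R}^n$) with $\mu(\mathcal{U})=\alpha$ that is not realizable.
   Context: For a subspace $\mathcal{U}\subseteq\mathbb{R}^n$, $P_{\mathcal{U}}$ denotes the orthogonal projector onto $\mathcal{U}$ and the coherence of $\mathcal{U}$ is $\mu(\mathcal{U})=\max_{i\in\{1,\dots,n\}}\|P_{\mathcal{U}}e_i\|_2^2$, where $e_i$ is the $i$-th standard basis vector. A correlation matrix is a positive semidefinite matrix with all diagonal entries equal to $1$; $\mathcal{U}$ is realizable if there is an $n\times n$ correlation matrix whose nullspace contains $\mathcal{U}$. *)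

theory Defs
  imports Complex_Main "Jordan_Normal_Form.Matrix"
begin

definition is_subspace :: "nat \<Rightarrow> real vec set \<Rightarrow> bool" where
  "is_subspace n U \<longleftrightarrow> U \<subseteq> carrier_vec n \<and> 0\<^sub>v n \<in> U \<and>
     (\<forall>u\<in>U. \<forall>v\<in>U. u + v \<in> U) \<and> (\<forall>c::real. \<forall>u\<in>U. c \<cdot>\<^sub>v u \<in> U)"

definition orth_proj :: "real vec set \<Rightarrow> real vec \<Rightarrow> real vec" where
  "orth_proj U x = (THE p. p \<in> U \<and> (\<forall>u\<in>U. (x - p) \<bullet> u = 0))"

definition sq_norm_vec :: "real vec \<Rightarrow> real" where
  "sq_norm_vec x = x \<bullet> x"

definition coherence :: "nat \<Rightarrow> real vec set \<Rightarrow> real" where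
  "coherence n U = Max ((\<lambda>i. sq_norm_vec (orth_proj U (unit_vec n i))) ` {..<n})"

definition psd_mat :: "nat \<Rightarrow> real mat \<Rightarrow> bool" where
  "psd_mat n A \<longleftrightarrow> A \<in> carrier_mat n n \<and> transpose_mat A = A \<and>
     (\<forall>x\<in>carrier_vec n. x \<bullet> (A *\<^sub>v x) \<ge> 0)"

definition correlation_mat :: "nat \<Rightarrow> real mat \<Rightarrow> bool" where
  "correlation_mat n A \<longleftrightarrow> psd_mat n A \<and> (\<forall>i<n. A $$ (i, i) = 1)"

definition realizable :: "nat \<Rightarrow> real vec set \<Rightarrow> bool" where
  "realizable n U \<longleftrightarrow> (\<exists>A. correlation_mat n A \<and> (\<forall>u\<in>U. A *\<^sub>v u = 0\<^sub>v n))"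

end

theory Submission imports Defs "Jordan_Normal_Form.Determinant" begin

lemma sp_sum: "v \<in> carrier_vec n \<Longrightarrow> w \<in> carrier_vec n \<Longrightarrow> v \<bullet> w = (\<Sum>i<n. v $ i * w $ i)"
  by (simp add: scalar_prod_def atLeast0LessThan)

lemma sp_self_nonneg: "v \<in> carrier_vec n \<Longrightarrow> (0::real) \<le> v \<bullet> v"
  by (simp add: sp_sum sum_nonneg)

lemma sp_self_zero: assumes "v \<in> carrier_vec n" "v \<bullet> v = (0::real)" shows "v = 0\<^sub>v n"
proof
  have "(\<Sum>i<n. v $ i * v $ i) = 0" using assms sp_sum by metis
  hence "\<forall>i\<in>{..<n}. v $ i * v $ i = 0" by (subst sum_nonneg_eq_0_iff[symmetric]) auto
  thus "\<And>i. i < dim_vec (0\<^sub>v n) \<Longrightarrow> v $ i = 0\<^sub>v n $ i" by auto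
  show "dim_vec v = dim_vec (0\<^sub>v n)" using assms by auto
qed

definition lc :: "nat \<Rightarrow> nat \<Rightarrow> (nat \<Rightarrow> real) \<Rightarrow> (nat \<Rightarrow> real vec) \<Rightarrow> real vec" where
  "lc n m c w = vec n (\<lambda>i. \<Sum>k<m. c k * w k $ i)"

lemma lc_carrier[simp]: "lc n m c w \<in> carrier_vec n" by (simp add: lc_def)

lemma subspace_carrier: "is_subspace n U \<Longrightarrow> u \<in> U \<Longrightarrow> u \<in> carrier_vec n"
  by (auto simp: is_subspace_def)

lemma lc_in: assumes U: "is_subspace n U" and w: "\<forall>k<m. w k \<in> U" shows "lc n m c w \<in> U"
  using w
proof (induction m)
  case 0
  have "lc n 0 c w = 0\<^sub>v n" by (auto simp: lc_def)
  then show ?case using U by (simp add: is_subspace_def)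
next
  case (Suc m)
  have wm: "w m \<in> carrier_vec n" using Suc.prems U subspace_carrier by blast
  have "lc n (Suc m) c w = lc n m c w + c m \<cdot>\<^sub>v w m"
    using wm by (auto simp: lc_def)
  moreover have "lc n m c w \<in> U" using Suc by auto
  moreover have "c m \<cdot>\<^sub>v w m \<in> U" using Suc.prems U by (simp add: is_subspace_def)
  ultimately show ?case using U by (simp add: is_subspace_def)
qed

lemma lc_sp: assumes w: "\<forall>k<m. w k \<in> carrier_vec n" and y: "y \<in> carrier_vec n"
  shows "lc n m c w \<bullet> y = (\<Sum>k<m. c k * (w k \<bullet> y))"
proof -
  have "lc n m c w \<bullet> y = (\<Sum>i<n. (\<Sum>k<m. c k * w k $ i) * y $ i)"
    using y by (simp add: sp_sum lc_def)
  also have "\<dots> = (\<Sum>k<m. c k * (\<Sum>i<n. w k $ i * y $ i))"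
    by (simp add: sum_distrib_right sum_distrib_left sum.swap[of _ "{..<m}"] mult.assoc)
  also have "\<dots> = (\<Sum>k<m. c k * (w k \<bullet> y))" using w y by (intro sum.cong) (auto simp: sp_sum)
  finally show ?thesis .
qed

definition ON :: "nat \<Rightarrow> real vec set \<Rightarrow> nat \<Rightarrow> (nat \<Rightarrow> real vec) \<Rightarrow> bool" where
  "ON n U m w \<longleftrightarrow> (\<forall>k<m. w k \<in> U) \<and> (\<forall>k<m. \<forall>l<m. w k \<bullet> w l = (if k = l then 1 else 0))"

lemma ON_carrier: "is_subspace n U \<Longrightarrow> ON n U m w \<Longrightarrow> \<forall>k<m. w k \<in> carrier_vec n"
  by (auto simp: ON_def subspace_carrier)

lemma ON_lc_w: assumes U: "is_subspace n U" and on: "ON n U m w" and l: "l < m"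
  shows "lc n m c w \<bullet> w l = c l"
proof -
  have "lc n m c w \<bullet> w l = (\<Sum>k<m. c k * (w k \<bullet> w l))"
    using lc_sp ON_carrier[OF U on] l by blast
  also have "\<dots> = (\<Sum>k<m. if k = l then c k else 0)"
    using on l by (intro sum.cong) (auto simp: ON_def)
  also have "\<dots> = c l" using l by simp
  finally show ?thesis .
qed

lemma bessel: assumes U: "is_subspace n U" and on: "ON n U m w" and y: "y \<in> carrier_vec n"
  shows "(\<Sum>k<m. (y \<bullet> w k)^2) \<le> y \<bullet> y"
proof -
  have wc: "\<forall>k<m. w k \<in> carrier_vec n" using ON_carrier[OF U on] .
  define c where "c k = y \<bullet> w k" for k
  define p where "p = lc n m c w"
  have pc: "p \<in> carrier_vec n" by (simp add: p_def)
  have py: "p \<bullet> y = (\<Sum>k<m. (y \<bullet> w k)^2)"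
    unfolding p_def using lc_sp[OF wc y] wc y
    by (simp add: c_def power2_eq_square comm_scalar_prod[of _ n y])
  have pp: "p \<bullet> p = (\<Sum>k<m. (y \<bullet> w k)^2)"
  proof -
    have "p \<bullet> p = (\<Sum>k<m. c k * (w k \<bullet> p))" unfolding p_def using lc_sp[OF wc] by simp
    also have "\<dots> = (\<Sum>k<m. c k * c k)"
      using ON_lc_w[OF U on] wc comm_scalar_prod[of _ n "lc n m c w"]
      by (intro sum.cong) (auto simp: p_def)
    finally show ?thesis by (simp add: c_def power2_eq_square)
  qed
  have "0 \<le> (y - p) \<bullet> (y - p)" using sp_self_nonneg[of "y - p" n] y pc by simp
  also have "(y - p) \<bullet> (y - p) = y \<bullet> y - 2 * (p \<bullet> y) + p \<bullet> p"
  proof -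
    have ymp: "y - p \<in> carrier_vec n" using y pc by simp
    have "(y - p) \<bullet> (y - p) = (\<Sum>i<n. (y $ i - p $ i) * (y $ i - p $ i))"
      using ymp y pc by (simp add: sp_sum[OF ymp ymp])
    also have "\<dots> = (\<Sum>i<n. y $ i * y $ i - 2 * (p $ i * y $ i) + p $ i * p $ i)"
      by (intro sum.cong) (auto simp: algebra_simps)
    also have "\<dots> = y \<bullet> y - 2 * (p \<bullet> y) + p \<bullet> p"
      using y pc by (simp add: sp_sum sum_subtractf sum.distrib sum_distrib_left)
    finally show ?thesis .
  qed
  finally show ?thesis using py pp by simp
qed

lemma ON_bound: assumes U: "is_subspace n U" and on: "ON n U m w" shows "m \<le> n"
proof -
  have wc: "\<forall>k<m. w k \<in> carrier_vec n" using ON_carrier[OF U on] .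
  have "real m = (\<Sum>k<m. w k \<bullet> w k)" using on by (simp add: ON_def)
  also have "\<dots> = (\<Sum>k<m. \<Sum>i<n. (unit_vec n i \<bullet> w k)^2)"
    using wc by (intro sum.cong) (auto simp: sp_sum power2_eq_square)
  also have "\<dots> = (\<Sum>i<n. \<Sum>k<m. (unit_vec n i \<bullet> w k)^2)" by (rule sum.swap)
  also have "\<dots> \<le> (\<Sum>i<n. unit_vec n i \<bullet> unit_vec n i)"
    by (intro sum_mono bessel[OF U on]) simp
  also have "\<dots> = real n" by simp
  finally show ?thesis by simp
qed

lemma subspace_minus: assumes U: "is_subspace n U" and u: "u \<in> U" and v: "v \<in> U"
  shows "u - v \<in> U"
proof -
  have uc: "u \<in> carrier_vec n" and vc: "v \<in> carrier_vec n" using U u v subspace_carrier by auto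
  have "u - v = u + (-1) \<cdot>\<^sub>v v" using uc vc by (intro eq_vecI) auto
  moreover have "(-1) \<cdot>\<^sub>v v \<in> U" using U v by (simp add: is_subspace_def)
  ultimately show ?thesis using U u by (simp add: is_subspace_def)
qed

lemma ON_extend: assumes U: "is_subspace n U" and on: "ON n U m w" and r: "r \<in> U" "r \<noteq> 0\<^sub>v n"
  and orth: "\<forall>l<m. w l \<bullet> r = 0"
  shows "ON n U (Suc m) (w(m := (1 / sqrt (r \<bullet> r)) \<cdot>\<^sub>v r))"
proof -
  have rc: "r \<in> carrier_vec n" using U r subspace_carrier by auto
  have wc: "\<forall>k<m. w k \<in> carrier_vec n" using ON_carrier[OF U on] .
  have rpos: "r \<bullet> r > 0" using sp_self_nonneg[OF rc] sp_self_zero[OF rc] r(2) by force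
  define v where "v = (1 / sqrt (r \<bullet> r)) \<cdot>\<^sub>v r"
  have vU: "v \<in> U" using U r by (simp add: is_subspace_def v_def)
  have vv: "v \<bullet> v = 1" using rc rpos
    by (simp add: v_def)
  have wv: "w l \<bullet> v = 0" if "l < m" for l using rc wc that orth by (simp add: v_def)
  have vw: "v \<bullet> w l = 0" if "l < m" for l
    using orth comm_scalar_prod[of r n "w l"] rc wc that by (simp add: v_def)
  show ?thesis unfolding v_def[symmetric] using on vU vv wv vw
    by (auto simp: ON_def less_Suc_eq)
qed

lemma proj_exists: assumes U: "is_subspace n U" and x: "x \<in> carrier_vec n"
  shows "\<exists>p\<in>U. \<forall>u\<in>U. (x - p) \<bullet> u = 0"
proof -
  define S where "S = {m. \<exists>w. ON n U m w}"
  have finS: "finite S" using ON_bound[OF U] by (intro finite_subset[of S "{..n}"]) (auto simp: S_def)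
  have "0 \<in> S" by (auto simp: S_def ON_def)
  define M where "M = Max S"
  have "M \<in> S" using finS \<open>0 \<in> S\<close> unfolding M_def by (intro Max_in) auto
  then obtain w where on: "ON n U M w" by (auto simp: S_def)
  have wc: "\<forall>k<M. w k \<in> carrier_vec n" using ON_carrier[OF U on] .
  define p where "p = lc n M (\<lambda>k. x \<bullet> w k) w"
  have pU: "p \<in> U" unfolding p_def using on lc_in[OF U] by (auto simp: ON_def)
  have pc: "p \<in> carrier_vec n" by (simp add: p_def)
  have xpc: "x - p \<in> carrier_vec n" using x pc by simp
  have xpw: "(x - p) \<bullet> w l = 0" if "l < M" for l
  proof -
    have "(x - p) \<bullet> w l = x \<bullet> w l - p \<bullet> w l"
      using minus_scalar_prod_distrib[OF x pc] wc that by auto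
    also have "p \<bullet> w l = x \<bullet> w l" unfolding p_def using ON_lc_w[OF U on that] .
    finally show ?thesis by simp
  qed
  have "\<forall>u\<in>U. (x - p) \<bullet> u = 0"
  proof (rule ccontr)
    assume "\<not> ?thesis"
    then obtain u where u: "u \<in> U" "(x - p) \<bullet> u \<noteq> 0" by auto
    have uc: "u \<in> carrier_vec n" using U u subspace_carrier by auto
    define q where "q = lc n M (\<lambda>k. u \<bullet> w k) w"
    have qU: "q \<in> U" unfolding q_def using on lc_in[OF U] by (auto simp: ON_def)
    have qc: "q \<in> carrier_vec n" by (simp add: q_def)
    define r where "r = u - q"
    have rU: "r \<in> U" unfolding r_def using subspace_minus[OF U u(1) qU] .
    have rc: "r \<in> carrier_vec n" using uc qc by (simp add: r_def)
    have wr: "w l \<bullet> r = 0" if "l < M" for l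
    proof -
      have "w l \<bullet> r = w l \<bullet> u - w l \<bullet> q"
        unfolding r_def using scalar_prod_minus_distrib[of "w l" n u q] wc that uc qc by auto
      also have "w l \<bullet> q = q \<bullet> w l" using comm_scalar_prod[of "w l" n q] wc that qc by auto
      also have "q \<bullet> w l = u \<bullet> w l" unfolding q_def using ON_lc_w[OF U on that] .
      also have "u \<bullet> w l = w l \<bullet> u" using comm_scalar_prod[of u n "w l"] wc that uc by auto
      finally show ?thesis by simp
    qed
    have "(x - p) \<bullet> q = 0"
    proof -
      have "(x - p) \<bullet> q = q \<bullet> (x - p)" using comm_scalar_prod[OF xpc qc] .
      also have "\<dots> = (\<Sum>k<M. (u \<bullet> w k) * (w k \<bullet> (x - p)))" unfolding q_def
        using lc_sp[OF wc xpc] .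
      also have "\<dots> = 0" using xpw comm_scalar_prod[OF _ xpc] wc
        by (intro sum.neutral) (metis lessThan_iff mult_zero_right)
      finally show ?thesis .
    qed
    hence "(x - p) \<bullet> r \<noteq> 0"
      using u(2) scalar_prod_minus_distrib[OF xpc uc qc] by (simp add: r_def)
    hence "r \<noteq> 0\<^sub>v n" using xpc by auto
    from ON_extend[OF U on rU this] wr have "Suc M \<in> S" by (auto simp: S_def)
    hence "Suc M \<le> M" using finS by (simp add: M_def)
    thus False by simp
  qed
  thus ?thesis using pU by auto
qed

lemma orth_proj_props: assumes U: "is_subspace n U" and x: "x \<in> carrier_vec n"
  shows "orth_proj U x \<in> U \<and> (\<forall>u\<in>U. (x - orth_proj U x) \<bullet> u = 0)"
proof -
  obtain p where p: "p \<in> U" "\<forall>u\<in>U. (x - p) \<bullet> u = 0" using proj_exists[OF U x] by blast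
  have uniq: "p' = p" if p': "p' \<in> U" "\<forall>u\<in>U. (x - p') \<bullet> u = 0" for p'
  proof -
    have pc: "p \<in> carrier_vec n" and p'c: "p' \<in> carrier_vec n" using U p p' subspace_carrier by auto
    have d: "p' - p \<in> U" using subspace_minus[OF U p'(1) p(1)] .
    have dc: "p' - p \<in> carrier_vec n" using pc p'c by simp
    have "(x - p) \<bullet> (p' - p) = 0" "(x - p') \<bullet> (p' - p) = 0" using p p' d by auto
    hence "x \<bullet> (p' - p) - p \<bullet> (p' - p) = 0" "x \<bullet> (p' - p) - p' \<bullet> (p' - p) = 0"
      using minus_scalar_prod_distrib[OF x pc dc] minus_scalar_prod_distrib[OF x p'c dc] by auto
    hence "(p' - p) \<bullet> (p' - p) = 0" using minus_scalar_prod_distrib[OF p'c pc dc] by simp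
    hence "p' - p = 0\<^sub>v n" using sp_self_zero[OF dc] by simp
    thus ?thesis using pc p'c
      by (metis (no_types, lifting) carrier_vecD eq_vecI index_minus_vec(1) index_zero_vec(1) right_minus_eq)
  qed
  have "\<exists>!p. p \<in> U \<and> (\<forall>u\<in>U. (x - p) \<bullet> u = 0)" using p uniq by blast
  thus ?thesis unfolding orth_proj_def by (rule theI')
qed

lemma exists_argmax: fixes f :: "nat \<Rightarrow> real" assumes "0 < n"
  shows "\<exists>i<n. \<forall>j<n. f j \<le> f i"
proof -
  have "finite (f ` {..<n})" "f ` {..<n} \<noteq> {}" using assms by auto
  hence "Max (f ` {..<n}) \<in> f ` {..<n}" by (rule Max_in)
  then obtain i where i: "i < n" "f i = Max (f ` {..<n})" by auto
  have "\<forall>j<n. f j \<le> f i" using i by auto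
  thus ?thesis using i by auto
qed

lemma solve_dd: fixes S :: "nat \<Rightarrow> nat \<Rightarrow> real"
  assumes dd: "\<forall>i<n. (\<Sum>j\<in>{..<n}-{i}. \<bar>S i j\<bar>) < \<bar>S i i\<bar>"
  shows "\<exists>x. \<forall>i<n. (\<Sum>j<n. S i j * x j) = b i"
proof -
  define Sm where "Sm = mat n n (\<lambda>(i,j). S i j)"
  have Sc: "Sm \<in> carrier_mat n n" by (simp add: Sm_def)
  have "det Sm \<noteq> 0"
  proof
    assume "det Sm = 0"
    then obtain v where v: "v \<in> carrier_vec n" "v \<noteq> 0\<^sub>v n" "Sm *\<^sub>v v = 0\<^sub>v n"
      using det_0_iff_vec_prod_zero_field[OF Sc] by auto
    have n0: "0 < n" using v by (cases "n = 0") auto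
    obtain i where i: "i < n" "\<forall>j<n. \<bar>v $ j\<bar> \<le> \<bar>v $ i\<bar>"
      using exists_argmax[OF n0, of "\<lambda>j. \<bar>v $ j\<bar>"] by auto
    have vi: "v $ i \<noteq> 0"
    proof
      assume "v $ i = 0"
      hence "\<forall>j<n. v $ j = 0" using i by fastforce
      hence "v = 0\<^sub>v n" using v(1) by (intro eq_vecI) auto
      thus False using v(2) by simp
    qed
    have "(Sm *\<^sub>v v) $ i = (\<Sum>j<n. S i j * v $ j)"
      using i v(1) by (simp add: Sm_def scalar_prod_def atLeast0LessThan)
    hence row0: "(\<Sum>j<n. S i j * v $ j) = 0" using v(3) i by simp
    have "(\<Sum>j<n. S i j * v $ j) = S i i * v $ i + (\<Sum>j\<in>{..<n}-{i}. S i j * v $ j)"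
      using i by (subst sum.remove[of _ i]) auto
    hence "\<bar>S i i * v $ i\<bar> = \<bar>\<Sum>j\<in>{..<n}-{i}. S i j * v $ j\<bar>" using row0 by simp
    also have "\<dots> \<le> (\<Sum>j\<in>{..<n}-{i}. \<bar>S i j\<bar> * \<bar>v $ i\<bar>)"
      by (rule order_trans[OF sum_abs]) (intro sum_mono, use i in \<open>auto simp: abs_mult intro: mult_left_mono\<close>)
    also have "\<dots> = (\<Sum>j\<in>{..<n}-{i}. \<bar>S i j\<bar>) * \<bar>v $ i\<bar>" by (simp add: sum_distrib_right)
    also have "\<dots> < \<bar>S i i\<bar> * \<bar>v $ i\<bar>" using dd i vi by auto
    finally show False by (simp add: abs_mult)
  qed
  from det_non_zero_imp_unit[OF Sc this, of "()"]
  obtain B where B: "B \<in> carrier_mat n n" "Sm * B = 1\<^sub>m n"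
    by (auto simp: Units_def ring_mat_def)
  define y where "y = B *\<^sub>v vec n b"
  have "Sm *\<^sub>v y = vec n b"
    unfolding y_def using B Sc by (simp add: assoc_mult_mat_vec[symmetric, of _ n n _ n])
  have "\<forall>i<n. (\<Sum>j<n. S i j * y $ j) = b i"
  proof (intro allI impI)
    fix i assume i: "i < n"
    have yc: "y \<in> carrier_vec n" using B by (simp add: y_def)
    have "(Sm *\<^sub>v y) $ i = b i" using \<open>Sm *\<^sub>v y = vec n b\<close> i by simp
    moreover have "(Sm *\<^sub>v y) $ i = (\<Sum>j<n. S i j * y $ j)"
      using i yc by (simp add: Sm_def scalar_prod_def atLeast0LessThan)
    ultimately show "(\<Sum>j<n. S i j * y $ j) = b i" by simp
  qed
  thus ?thesis by blast
qed

lemma nonneg_sol: fixes S :: "nat \<Rightarrow> nat \<Rightarrow> real" and q d :: "nat \<Rightarrow> real"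
  assumes S0: "\<forall>i<n. \<forall>j<n. 0 \<le> S i j"
  and Sd: "\<forall>i<n. S i i = (q i)^2"
  and Sr: "\<forall>i<n. (\<Sum>j<n. S i j) = q i"
  and q: "\<forall>i<n. 1/2 < q i"
  and sol: "\<forall>i<n. (\<Sum>j<n. S i j * d j) = 1"
  shows "\<forall>i<n. 0 \<le> d i"
proof (cases "n = 0")
  case True thus ?thesis by simp
next
  case False
  hence n0: "0 < n" by simp
  define \<delta> where "\<delta> j = max 0 (max (- d j) (d j - 4))" for j
  obtain i where i: "i < n" "\<forall>j<n. \<delta> j \<le> \<delta> i" using exists_argmax[OF n0, of \<delta>] by auto
  define t where "t = \<delta> i"
  have bnd: "- t \<le> d j \<and> d j \<le> 4 + t" if "j < n" for j
    using i(2) that by (auto simp: t_def \<delta>_def)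
  define \<sigma> where "\<sigma> = (\<Sum>j\<in>{..<n}-{i}. S i j)"
  have split: "(\<Sum>j<n. f j) = f i + (\<Sum>j\<in>{..<n}-{i}. f j)" for f :: "nat \<Rightarrow> real"
    using i by (subst sum.remove[of _ i]) auto
  have sig: "\<sigma> = q i - (q i)^2" using Sr Sd i split[of "S i"] by (simp add: \<sigma>_def)
  have eq: "S i i * d i + (\<Sum>j\<in>{..<n}-{i}. S i j * d j) = 1" using sol i split[of "\<lambda>j. S i j * d j"] by simp
  have up: "(\<Sum>j\<in>{..<n}-{i}. S i j * d j) \<le> \<sigma> * (4 + t)"
    unfolding \<sigma>_def sum_distrib_right using S0 i bnd by (intro sum_mono mult_left_mono) auto
  have lo: "- (\<sigma> * t) \<le> (\<Sum>j\<in>{..<n}-{i}. S i j * d j)"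
  proof -
    have "(\<Sum>j\<in>{..<n}-{i}. S i j * (- t)) \<le> (\<Sum>j\<in>{..<n}-{i}. S i j * d j)"
      using S0 i bnd by (intro sum_mono mult_left_mono) auto
    thus ?thesis by (simp add: \<sigma>_def sum_distrib_right sum_negf)
  qed
  have qi: "1/2 < q i" using q i by auto
  have pq: "0 < q i * (2 * q i - 1)" using qi by (intro mult_pos_pos) auto
  have gap: "0 < S i i - \<sigma>" using sig Sd i pq by (simp add: power2_eq_square algebra_simps)
  have sq: "0 \<le> (2 * q i - 1) * (2 * q i - 1)" by simp
  have four: "4 * \<sigma> \<le> 1" using sig sq by (simp add: power2_eq_square algebra_simps)
  have pq2: "0 < (2 * q i - 1) * (2 * q i + 1)" using qi by (intro mult_pos_pos) auto
  have four2: "1 < 4 * S i i" using Sd i pq2 by (simp add: power2_eq_square algebra_simps)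
  have t0: "t \<le> 0"
  proof (rule ccontr)
    assume "\<not> t \<le> 0"
    hence tp: "0 < t" by simp
    have "0 < (S i i - \<sigma>) * t" using gap tp by simp
    show False
    proof (cases "d i < 0")
      case True
      hence "t = - d i" using tp by (auto simp: t_def \<delta>_def)
      thus False using eq up four \<open>0 < (S i i - \<sigma>) * t\<close> by (simp add: algebra_simps)
    next
      case False
      hence "t = d i - 4" using tp by (auto simp: t_def \<delta>_def)
      hence "S i i * d i = S i i * t + 4 * S i i" by (simp add: algebra_simps)
        (metis distrib_left mult.commute)
      thus False using eq lo four2 \<open>0 < (S i i - \<sigma>) * t\<close> by (simp add: algebra_simps)
    qed
  qed
  show ?thesis
  proof (intro allI impI)
    fix j assume "j < n"
    hence "\<delta> j \<le> 0" using i t0 by (auto simp: t_def)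
    thus "0 \<le> d j" by (simp add: \<delta>_def)
  qed
qed

lemma part1: assumes U: "is_subspace n U" and coh: "coherence n U < 1/2"
  shows "realizable n U"
proof -
  define \<pi> where "\<pi> j = orth_proj U (unit_vec n j)" for j
  have \<pi>U: "\<pi> j \<in> U" if "j < n" for j
    using orth_proj_props[OF U unit_vec_carrier] by (simp add: \<pi>_def)
  have \<pi>c: "\<pi> j \<in> carrier_vec n" if "j < n" for j using \<pi>U[OF that] U subspace_carrier by auto
  have H2: "\<pi> j \<bullet> u = u $ j" if j: "j < n" and u: "u \<in> U" for j u
  proof -
    have uc: "u \<in> carrier_vec n" using U u subspace_carrier by auto
    have "(unit_vec n j - \<pi> j) \<bullet> u = 0"
      using orth_proj_props[OF U unit_vec_carrier] u by (simp add: \<pi>_def)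
    hence "unit_vec n j \<bullet> u - \<pi> j \<bullet> u = 0"
      using minus_scalar_prod_distrib[OF unit_vec_carrier \<pi>c[OF j] uc] by simp
    thus ?thesis using scalar_prod_left_unit[OF uc j] by simp
  qed
  have H3: "\<pi> j $ i = \<pi> i $ j" if "i < n" "j < n" for i j
    using H2[OF that(1) \<pi>U[OF that(2)]] H2[OF that(2) \<pi>U[OF that(1)]]
      comm_scalar_prod[OF \<pi>c[OF that(1)] \<pi>c[OF that(2)]] by simp
  define p where "p i = \<pi> i \<bullet> \<pi> i" for i
  have H4: "(\<Sum>j<n. (\<pi> i $ j)^2) = p i" if "i < n" for i
    using \<pi>c[OF that] by (simp add: p_def sp_sum power2_eq_square)
  have H4': "\<pi> i $ i = p i" if "i < n" for i using H2[OF that \<pi>U[OF that]] by (simp add: p_def)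
  have H5: "p i < 1/2" if i: "i < n" for i
  proof -
    have "p i \<le> coherence n U" unfolding coherence_def
      using i by (intro Max_ge) (auto simp: p_def \<pi>_def sq_norm_vec_def)
    thus ?thesis using coh by simp
  qed
  have p0: "0 \<le> p i" if "i < n" for i using sp_self_nonneg[OF \<pi>c[OF that]] by (simp add: p_def)
  define Q where "Q i j = (if i = j then 1 else 0) - \<pi> j $ i" for i j
  have Qsym: "Q i j = Q j i" if "i < n" "j < n" for i j using H3[OF that] by (auto simp: Q_def)
  define S where "S i j = (Q i j)^2" for i j
  have Sii: "S i i = (1 - p i)^2" if "i < n" for i using H4'[OF that] by (simp add: S_def Q_def)
  have Srow: "(\<Sum>j<n. S i j) = 1 - p i" if i: "i < n" for i
  proof -
    have "(\<Sum>j<n. S i j) = (\<Sum>j<n. (if i = j then 1 - 2 * \<pi> i $ j else 0) + (\<pi> i $ j)^2)"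
      using H3 i by (intro sum.cong) (auto simp: S_def Q_def power2_eq_square algebra_simps)
    also have "\<dots> = (1 - 2 * \<pi> i $ i) + p i" using i H4[OF i] by (simp add: sum.distrib)
    finally show ?thesis using H4'[OF i] by simp
  qed
  have split: "(\<Sum>j<n. f j) = f i + (\<Sum>j\<in>{..<n}-{i}. f j)" if "i < n" for f :: "nat \<Rightarrow> real" and i
    using that by (subst sum.remove[of _ i]) auto
  have dd: "\<forall>i<n. (\<Sum>j\<in>{..<n}-{i}. \<bar>S i j\<bar>) < \<bar>S i i\<bar>"
  proof (intro allI impI)
    fix i assume i: "i < n"
    have "(\<Sum>j\<in>{..<n}-{i}. \<bar>S i j\<bar>) = (\<Sum>j\<in>{..<n}-{i}. S i j)" by (simp add: S_def)
    also have "\<dots> = (1 - p i) - (1 - p i)^2" using split[OF i, of "S i"] Srow[OF i] Sii[OF i] by simp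
    also have "\<dots> < (1 - p i)^2"
    proof -
      have "0 < (1 - p i) * (1 - 2 * p i)" using H5[OF i] p0[OF i] by (intro mult_pos_pos) auto
      thus ?thesis by (simp add: power2_eq_square algebra_simps)
    qed
    also have "\<dots> = \<bar>S i i\<bar>" using Sii[OF i] by simp
    finally show "(\<Sum>j\<in>{..<n}-{i}. \<bar>S i j\<bar>) < \<bar>S i i\<bar>" .
  qed
  obtain d where d: "\<forall>i<n. (\<Sum>j<n. S i j * d j) = 1" using solve_dd[OF dd, of "\<lambda>_. 1"] by auto
  have dnn: "\<forall>i<n. 0 \<le> d i"
    by (rule nonneg_sol[of n S "\<lambda>i. 1 - p i" d]) (use Sii Srow H5 d in \<open>auto simp: S_def\<close>)
  define A where "A = mat n n (\<lambda>(i,j). \<Sum>k<n. Q i k * d k * Q k j)"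
  have Ac: "A \<in> carrier_mat n n" by (simp add: A_def)
  have Asym: "transpose_mat A = A"
  proof (rule eq_matI)
    fix i j assume "i < dim_row A" "j < dim_col A"
    hence ij: "i < n" "j < n" by (auto simp: A_def)
    show "transpose_mat A $$ (i, j) = A $$ (i, j)"
      using ij Qsym by (auto simp: A_def intro!: sum.cong)
  qed (auto simp: A_def)
  have Adiag: "A $$ (i, i) = 1" if i: "i < n" for i
  proof -
    have "A $$ (i, i) = (\<Sum>k<n. S i k * d k)"
      using i Qsym by (auto simp: A_def S_def power2_eq_square intro!: sum.cong)
    thus ?thesis using d i by simp
  qed
  have Aker: "A *\<^sub>v u = 0\<^sub>v n" if u: "u \<in> U" for u
  proof -
    have uc: "u \<in> carrier_vec n" using U u subspace_carrier by auto
    have Qu: "(\<Sum>j<n. Q k j * u $ j) = 0" if k: "k < n" for k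
    proof -
      have "(\<Sum>j<n. Q k j * u $ j) = (\<Sum>j<n. (if k = j then u $ j else 0) - \<pi> k $ j * u $ j)"
        using H3 k by (intro sum.cong) (auto simp: Q_def algebra_simps)
      also have "\<dots> = u $ k - \<pi> k \<bullet> u" using k uc \<pi>c[OF k] by (simp add: sum_subtractf sp_sum)
      finally show ?thesis using H2[OF k u] by simp
    qed
    show ?thesis
    proof (rule eq_vecI)
      fix i assume "i < dim_vec (0\<^sub>v n)"
      hence i: "i < n" by simp
      have "(A *\<^sub>v u) $ i = (\<Sum>j<n. (\<Sum>k<n. Q i k * d k * Q k j) * u $ j)"
        using i uc by (simp add: A_def scalar_prod_def atLeast0LessThan)
      also have "\<dots> = (\<Sum>j<n. \<Sum>k<n. Q i k * d k * Q k j * u $ j)"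
        by (simp add: sum_distrib_right)
      also have "\<dots> = (\<Sum>k<n. \<Sum>j<n. Q i k * d k * Q k j * u $ j)" by (rule sum.swap)
      also have "\<dots> = (\<Sum>k<n. Q i k * d k * (\<Sum>j<n. Q k j * u $ j))"
        by (simp add: sum_distrib_left mult.assoc)
      also have "\<dots> = 0" using Qu by simp
      finally show "(A *\<^sub>v u) $ i = 0\<^sub>v n $ i" using i by simp
    qed (simp add: A_def)
  qed
  have Apsd: "0 \<le> x \<bullet> (A *\<^sub>v x)" if x: "x \<in> carrier_vec n" for x
  proof -
    define y where "y k = (\<Sum>j<n. Q k j * x $ j)" for k
    have "x \<bullet> (A *\<^sub>v x) = (\<Sum>i<n. x $ i * (\<Sum>j<n. (\<Sum>k<n. Q i k * d k * Q k j) * x $ j))"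
      using x by (simp add: A_def scalar_prod_def atLeast0LessThan)
    also have "\<dots> = (\<Sum>i<n. x $ i * (\<Sum>k<n. Q i k * d k * y k))"
    proof (rule sum.cong[OF refl])
      fix i assume "i \<in> {..<n}"
      have "(\<Sum>j<n. (\<Sum>k<n. Q i k * d k * Q k j) * x $ j) = (\<Sum>j<n. \<Sum>k<n. Q i k * d k * Q k j * x $ j)"
        by (simp add: sum_distrib_right)
      also have "\<dots> = (\<Sum>k<n. \<Sum>j<n. Q i k * d k * Q k j * x $ j)" by (rule sum.swap)
      also have "\<dots> = (\<Sum>k<n. Q i k * d k * y k)" by (simp add: y_def sum_distrib_left mult.assoc)
      finally show "x $ i * (\<Sum>j<n. (\<Sum>k<n. Q i k * d k * Q k j) * x $ j) = x $ i * (\<Sum>k<n. Q i k * d k * y k)" by simp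
    qed
    also have "\<dots> = (\<Sum>i<n. \<Sum>k<n. d k * y k * (Q i k * x $ i))"
    proof (rule sum.cong[OF refl])
      fix i assume "i \<in> {..<n}"
      show "x $ i * (\<Sum>k<n. Q i k * d k * y k) = (\<Sum>k<n. d k * y k * (Q i k * x $ i))"
        unfolding sum_distrib_left by (rule sum.cong[OF refl]) simp
    qed
    also have "\<dots> = (\<Sum>k<n. \<Sum>i<n. d k * y k * (Q i k * x $ i))" by (rule sum.swap)
    also have "\<dots> = (\<Sum>k<n. d k * y k * (\<Sum>i<n. Q i k * x $ i))" by (simp add: sum_distrib_left)
    also have "\<dots> = (\<Sum>k<n. d k * y k * y k)"
    proof (rule sum.cong[OF refl])
      fix k assume "k \<in> {..<n}"
      hence "(\<Sum>i<n. Q i k * x $ i) = y k" unfolding y_def using Qsym by (intro sum.cong) auto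
      thus "d k * y k * (\<Sum>i<n. Q i k * x $ i) = d k * y k * y k" by simp
    qed
    also have "\<dots> \<ge> 0" using dnn by (auto intro!: sum_nonneg simp: mult.assoc)
    finally show ?thesis .
  qed
  have "correlation_mat n A"
    unfolding correlation_mat_def psd_mat_def using Ac Asym Adiag Apsd by auto
  thus ?thesis unfolding realizable_def using Aker by blast
qed

lemma part2: assumes a1: "1/2 < \<alpha>" and a2: "\<alpha> \<le> (1::real)"
  shows "\<exists>(n::nat) U. is_subspace n U \<and> coherence n U = \<alpha> \<and> \<not> realizable n U"
proof -
  define a where "a = sqrt \<alpha>"
  define b where "b = sqrt (1 - \<alpha>)"
  have a2': "a^2 = \<alpha>" using a1 by (simp add: a_def)
  have b2': "b^2 = 1 - \<alpha>" using a2 by (simp add: b_def)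
  have apos: "0 < a" using a1 by (simp add: a_def)
  define u where "u = vec 2 (\<lambda>i. if i = 0 then a else b)"
  have uc: "u \<in> carrier_vec 2" by (simp add: u_def)
  define U where "U = range (\<lambda>c. c \<cdot>\<^sub>v u)"
  have U: "is_subspace 2 U"
    unfolding is_subspace_def
  proof (intro conjI ballI allI)
    show "U \<subseteq> carrier_vec 2" using uc by (auto simp: U_def)
    show "0\<^sub>v 2 \<in> U" unfolding U_def
      by (rule range_eqI[of _ _ 0]) (use uc in \<open>auto intro!: eq_vecI\<close>)
    fix v w assume "v \<in> U" "w \<in> U"
    then obtain c c' where "v = c \<cdot>\<^sub>v u" "w = c' \<cdot>\<^sub>v u" by (auto simp: U_def)
    thus "v + w \<in> U" unfolding U_def
      by (intro range_eqI[of _ _ "c + c'"]) (use uc in \<open>auto intro!: eq_vecI simp: algebra_simps\<close>)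
  next
    fix c :: real and v assume "v \<in> U"
    then obtain c' where "v = c' \<cdot>\<^sub>v u" by (auto simp: U_def)
    thus "c \<cdot>\<^sub>v v \<in> U" unfolding U_def
      by (intro range_eqI[of _ _ "c * c'"]) (use uc in \<open>auto intro!: eq_vecI\<close>)
  qed
  have uu: "u \<bullet> u = 1" unfolding sp_sum[OF uc uc] using a2' b2'
    by (simp add: u_def numeral_2_eq_2 power2_eq_square)
  have proj: "sq_norm_vec (orth_proj U (unit_vec 2 i)) = (u $ i)^2" if i: "i < 2" for i
  proof -
    have P: "orth_proj U (unit_vec 2 i) \<in> U \<and> (\<forall>v\<in>U. (unit_vec 2 i - orth_proj U (unit_vec 2 i)) \<bullet> v = 0)"
      by (rule orth_proj_props[OF U unit_vec_carrier])
    then obtain c where c: "orth_proj U (unit_vec 2 i) = c \<cdot>\<^sub>v u" by (auto simp: U_def)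
    have "u \<in> U" unfolding U_def by (rule range_eqI[of _ _ 1]) (use uc in \<open>auto intro!: eq_vecI\<close>)
    hence o: "(unit_vec 2 i - c \<cdot>\<^sub>v u) \<bullet> u = 0" using P c by auto
    have "unit_vec 2 i \<bullet> u - (c \<cdot>\<^sub>v u) \<bullet> u = 0"
      using o minus_scalar_prod_distrib[of "unit_vec 2 i" 2 "c \<cdot>\<^sub>v u" u] uc by simp
    hence "c = u $ i" using uu uc i by simp
    thus ?thesis using c uc uu by (simp add: sq_norm_vec_def power2_eq_square)
  qed
  have "coherence 2 U = Max {\<alpha>, 1 - \<alpha>}"
  proof -
    have "(\<lambda>i. sq_norm_vec (orth_proj U (unit_vec 2 i))) ` {..<2} = {(u $ 0)^2, (u $ 1)^2}"
      using proj by (simp add: numeral_2_eq_2 lessThan_Suc insert_commute)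
    thus ?thesis using a2' b2' by (simp add: coherence_def u_def)
  qed
  hence coh: "coherence 2 U = \<alpha>" using a1 by simp
  have nr: "\<not> realizable 2 U"
  proof
    assume "realizable 2 U"
    then obtain A where A: "correlation_mat 2 A" "\<forall>v\<in>U. A *\<^sub>v v = 0\<^sub>v 2"
      by (auto simp: realizable_def)
    have Ac: "A \<in> carrier_mat 2 2" and At: "transpose_mat A = A" and Ad: "\<forall>i<2. A $$ (i,i) = 1"
      using A(1) by (auto simp: correlation_mat_def psd_mat_def)
    have "u \<in> U" unfolding U_def by (rule range_eqI[of _ _ 1]) (use uc in \<open>auto intro!: eq_vecI\<close>)
    hence Au: "A *\<^sub>v u = 0\<^sub>v 2" using A(2) by auto
    have sym: "A $$ (1,0) = A $$ (0,1)"
      using arg_cong[OF At, of "\<lambda>M. M $$ (0,1)"] Ac by auto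
    have r: "(A *\<^sub>v u) $ i = A $$ (i,0) * a + A $$ (i,1) * b" if "i < 2" for i
      using that Ac uc by (simp add: scalar_prod_def u_def numeral_2_eq_2)
    define c where "c = A $$ (0,1)"
    have e0: "a + c * b = 0" using r[of 0] Au Ad by (simp add: c_def)
    have e1: "c * a + b = 0" using r[of 1] Au Ad sym by (simp add: c_def)
    have bb: "b = - (c * a)" using e1 by linarith
    have "a + c * (- (c * a)) = 0" using e0 bb by simp
    hence "a * (1 - c * c) = 0" by (simp add: algebra_simps)
    hence cc: "c * c = 1" using apos by simp
    have "b * b = (c * c) * (a * a)" using bb by (simp add: algebra_simps)
    hence "b * b = a * a" using cc by simp
    hence "\<alpha> = 1 - \<alpha>" using a2' b2' by (simp add: power2_eq_square)
    thus False using a1 by simp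
  qed
  show ?thesis using U coh nr by blast
qed

theorem theorem4p2:
  shows "(\<forall>(n::nat) U. is_subspace n U \<and> coherence n U < 1/2 \<longrightarrow> realizable n U) \<and>
         (\<forall>\<alpha>::real. 1/2 < \<alpha> \<and> \<alpha> \<le> 1 \<longrightarrow>
            (\<exists>(n::nat) U. is_subspace n U \<and> coherence n U = \<alpha> \<and> \<not> realizable n U))"
  using part1 part2 by blast

end
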